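(* Let $\mathbf{L}=(L,\wedge,\vee)$ be a semidistributive lattice. Then $\mathbf{L}$ hypersatisfies the hyper-quasi-identity $$(F(x,y)=F(x,z))\rightarrow (F(x,y)=F(x,G(y,z))),$$ where $F$ and $G$ are binary hypervariables. Explicitly: for all binary lattice terms $p(x,y)$ and $q(x,y)$ and all $a,b,c\in L$, if $p^{\mathbf L}(a,b)=p^{\mathbf L}(a,c)$ then $p^{\mathbf L}(a,b)=p^{\mathbf L}(a,q^{\mathbf L}(b,c))$.
   Context: A lattice is join-semidistributive if it satisfies the quasi-identity $x\vee y=x\vee z \rightarrow x\vee y = x\vee(y\wedge z)$, and meet-semidistributive if it satisfies $x\wedge y=x\wedge z\rightarrow x\wedge y=x\wedge(y\vee z)$. A lattice is semidistributive if it is both join- and meet-semidistributive. A hyper-quasi-identity with hypervariables $F,G$ is hypersatisfied in an algebra if the quasi-identity obtained by substituting arbitrary terms of the type (of the corresponding arities, here binary lattice terms) for the hypervariables, leaving the individual variables unchanged, holds in the algebra for all values of the individual variables. *)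

theory Defs
  imports Main
begin

datatype lterm2 = VarX | VarY | Meet lterm2 lterm2 | Join lterm2 lterm2

fun eval2 :: "lterm2 \<Rightarrow> 'a::lattice \<Rightarrow> 'a \<Rightarrow> 'a" where
  "eval2 VarX a b = a"
| "eval2 VarY a b = b"
| "eval2 (Meet s t) a b = inf (eval2 s a b) (eval2 t a b)"
| "eval2 (Join s t) a b = sup (eval2 s a b) (eval2 t a b)"

definition join_semidistributive :: "'a::lattice itself \<Rightarrow> bool" where
  "join_semidistributive _ \<longleftrightarrow>
     (\<forall>x y z :: 'a. sup x y = sup x z \<longrightarrow> sup x y = sup x (inf y z))"

definition meet_semidistributive :: "'a::lattice itself \<Rightarrow> bool" where
  "meet_semidistributive _ \<longleftrightarrow>
     (\<forall>x y z :: 'a. inf x y = inf x z \<longrightarrow> inf x y = inf x (sup y z))"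

definition semidistributive :: "'a::lattice itself \<Rightarrow> bool" where
  "semidistributive T \<longleftrightarrow> join_semidistributive T \<and> meet_semidistributive T"

end

theory Submission
  imports Defs
begin

lemma eval2_cases:
  "(\<forall>a b::'a::lattice. eval2 p a b = a) \<or> (\<forall>a b::'a. eval2 p a b = b) \<or>
   (\<forall>a b::'a. eval2 p a b = inf a b) \<or> (\<forall>a b::'a. eval2 p a b = sup a b)"
proof (induction p)
  case (Meet s t)
  then show ?case
    by (elim disjE) (simp_all add: inf_sup_aci inf_absorb1 inf_absorb2 sup_absorb1 sup_absorb2)
next
  case (Join s t)
  then show ?case
    by (elim disjE) (simp_all add: inf_sup_aci inf_absorb1 inf_absorb2 sup_absorb1 sup_absorb2)
qed auto

theorem proposition3p2:
  fixes a b c :: "'a::lattice" and p q :: lterm2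
  assumes "semidistributive TYPE('a)"
    and "eval2 p a b = eval2 p a c"
  shows "eval2 p a b = eval2 p a (eval2 q b c)"
proof -
  have J: "\<And>x y z::'a. sup x y = sup x z \<Longrightarrow> sup x y = sup x (inf y z)"
    and M: "\<And>x y z::'a. inf x y = inf x z \<Longrightarrow> inf x y = inf x (sup y z)"
    using assms(1) unfolding semidistributive_def join_semidistributive_def meet_semidistributive_def
    by blast+
  have Mi: "inf a b = inf a (inf b c)" if "inf a b = inf a c"
    by (metis that inf.assoc inf.idem inf.commute inf.left_commute)
  have Js: "sup a b = sup a (sup b c)" if "sup a b = sup a c"
    by (metis that sup.assoc sup.idem sup.commute sup.left_commute)
  have Mb: "inf a b = inf a c \<Longrightarrow> inf a b = inf a (eval2 q b c)"
    using eval2_cases[of q, where 'a='a] M[of a b c] Mi by auto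
  have Jb: "sup a b = sup a c \<Longrightarrow> sup a b = sup a (eval2 q b c)"
    using eval2_cases[of q, where 'a='a] J[of a b c] Js by auto
  have Id: "eval2 q c c = c" using eval2_cases[of q, where 'a='a] by auto
  show ?thesis
    using Id eval2_cases[of p, where 'a='a] assms(2) Mb Jb
    by (elim disjE) auto
qed

end
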